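(* Let $R$ be a reduced ring. Then the trivial extension $T(R,R)$ is almost Armendariz.
   Context: All rings are associative with identity. A ring is reduced if it has no nonzero nilpotent elements. For a ring $R$ and an $R$-bimodule $M$, the trivial extension $T(R,M)$ is $R\times M$ with componentwise addition and multiplication $(r_1,m_1)(r_2,m_2)=(r_1r_2, r_1m_2+m_1r_2)$; it is isomorphic to the ring of matrices $\begin{pmatrix} r& m\\ 0& r\end{pmatrix}$, $r\in R$, $m\in M$. For a ring $R$, $P(R)$ denotes the prime radical of $R$ (the intersection of all prime ideals of $R$, equivalently the set of strongly nilpotent elements of $R$). A ring $R$ is called almost Armendariz if whenever $f(x)=\sum_{i=0}^m a_ix^i$ and $g(x)=\sum_{j=0}^n b_jx^j\in R[x]$ satisfy $f(x)g(x)=0$, then $a_ib_j\in P(R)$ for all $0\le i\le m$, $0\le j\le n$. *)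

theory Defs
  imports Main
begin

definition reduced :: "'a::ring_1 itself \<Rightarrow> bool" where
  "reduced _ \<longleftrightarrow> (\<forall>x::'a. (\<exists>n. x ^ n = 0) \<longrightarrow> x = 0)"

definition two_sided_ideal :: "'a::ring_1 set \<Rightarrow> bool" where
  "two_sided_ideal I \<longleftrightarrow> 0 \<in> I \<and> (\<forall>x\<in>I. \<forall>y\<in>I. x + y \<in> I) \<and> (\<forall>x\<in>I. - x \<in> I)
     \<and> (\<forall>r x. x \<in> I \<longrightarrow> r * x \<in> I \<and> x * r \<in> I)"

text \<open>Prime ideal: proper ideal P with AB \<subseteq> P implying A \<subseteq> P or B \<subseteq> P for ideals A, B
  (AB \<subseteq> P written out as containment of all products, P being additively closed).\<close>
definition prime_ideal :: "'a::ring_1 set \<Rightarrow> bool" where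
  "prime_ideal P \<longleftrightarrow> two_sided_ideal P \<and> P \<noteq> UNIV \<and>
     (\<forall>A B. two_sided_ideal A \<longrightarrow> two_sided_ideal B \<longrightarrow>
        (\<forall>a\<in>A. \<forall>b\<in>B. a * b \<in> P) \<longrightarrow> A \<subseteq> P \<or> B \<subseteq> P)"

definition prime_radical :: "'a::ring_1 itself \<Rightarrow> 'a set" where
  "prime_radical _ = \<Inter> {P :: 'a set. prime_ideal P}"

text \<open>Polynomials f = sum a_i x^i (i \<le> m) and g = sum b_j x^j (j \<le> n) in R[x] are
  represented by coefficient functions; f g = 0 means every coefficient of the product vanishes.\<close>
definition almost_armendariz :: "'a::ring_1 itself \<Rightarrow> bool" where
  "almost_armendariz T \<longleftrightarrow>
     (\<forall>(a :: nat \<Rightarrow> 'a) (b :: nat \<Rightarrow> 'a) (m::nat) (n::nat).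
        (\<forall>i>m. a i = 0) \<longrightarrow> (\<forall>j>n. b j = 0) \<longrightarrow>
        (\<forall>k. (\<Sum>i\<le>k. a i * b (k - i)) = 0) \<longrightarrow>
        (\<forall>i\<le>m. \<forall>j\<le>n. a i * b j \<in> prime_radical T))"

datatype 'a te = TE (te_r: 'a) (te_m: 'a)

instantiation te :: (ring_1) ring_1
begin
definition "0 = TE 0 0"
definition "1 = TE 1 0"
definition "x + y = TE (te_r x + te_r y) (te_m x + te_m y)"
definition "x - y = TE (te_r x - te_r y) (te_m x - te_m y)"
definition "- x = TE (- te_r x) (- te_m x)"
definition "x * y = TE (te_r x * te_r y) (te_r x * te_m y + te_m x * te_r y)"
instance
  by intro_classes
     (auto simp: zero_te_def one_te_def plus_te_def minus_te_def uminus_te_def times_te_def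
        algebra_simps te.expand)
end

end

theory Submission
  imports Defs
begin

lemma red_sq: assumes "reduced TYPE('a::ring_1)" and "(x::'a) * x = 0" shows "x = 0"
  using assms unfolding reduced_def
  by (metis power2_eq_square)

lemma red_comm: assumes "reduced TYPE('a::ring_1)" and "(x::'a) * y = 0" shows "y * x = 0"
proof -
  have "(y*x)*(y*x) = y*(x*y)*x" by (simp add: mult.assoc)
  then show ?thesis using assms red_sq by (metis mult_zero_left mult_zero_right)
qed

lemma red_armendariz:
  assumes red: "reduced TYPE('a::ring_1)"
    and h: "\<forall>k. (\<Sum>i\<le>k. (a::nat\<Rightarrow>'a) i * b (k - i)) = 0"
  shows "a p * b q = 0"
proof -
  have "\<forall>p q. p + q = k \<longrightarrow> a p * b q = 0" for k
  proof (induction k rule: less_induct)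
    case (less k)
    show ?case
    proof (intro allI impI)
      fix p q assume pq: "p + q = k"
      show "a p * b q = 0" using pq
      proof (induction p arbitrary: q rule: less_induct)
        case (less p)
        have "(\<Sum>i\<le>k. a i * b (k - i)) * a p = 0" using h by simp
        hence s: "(\<Sum>i\<le>k. a i * b (k - i) * a p) = 0" by (simp add: sum_distrib_right)
        have z: "a i * b (k - i) * a p = 0" if "i \<le> k" "i \<noteq> p" for i
        proof (cases "i < p")
          case True
          then have "a i * b (k - i) = 0" using less.IH[of i "k - i"] that less.prems by simp
          then show ?thesis by simp
        next
          case False
          then have "p + (k - i) < k" using that less.prems by simp
          then have "a p * b (k - i) = 0" using `\<And>y. y < k \<Longrightarrow> \<forall>p q. p + q = y \<longrightarrow> a p * b q = 0` by blast
          then have "b (k - i) * a p = 0" using red red_comm by blast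
          then show ?thesis by (simp add: mult.assoc)
        qed
        have "(\<Sum>i\<le>k. a i * b (k - i) * a p) = a p * b (k - p) * a p"
        proof -
          have "p \<in> {..k}" using less.prems by simp
          then have "(\<Sum>i\<le>k. a i * b (k - i) * a p) = a p * b (k - p) * a p + (\<Sum>i\<in>{..k} - {p}. a i * b (k - i) * a p)"
            by (simp add: sum.remove)
          also have "(\<Sum>i\<in>{..k} - {p}. a i * b (k - i) * a p) = 0"
            using z by (intro sum.neutral) auto
          finally show ?thesis by simp
        qed
        with s have "a p * b q * a p = 0" using less.prems by (metis add_diff_cancel_left')
        then have "(a p * b q) * (a p * b q) = 0" by (metis mult.assoc mult_zero_left)
        then show ?case using red red_sq by blast
      qed
    qed
  qed
  then show ?thesis by blast
qed

lemma te_r_sum: "te_r (sum f A) = (\<Sum>x\<in>A. te_r (f x :: 'a::ring_1 te))"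
  by (induction A rule: infinite_finite_induct) (auto simp: zero_te_def plus_te_def)

lemma te_nil_in_rad: "TE 0 (m::'a::ring_1) \<in> prime_radical TYPE('a te)"
proof -
  let ?A = "{TE 0 x | x::'a. True}"
  have idA: "two_sided_ideal ?A"
    unfolding two_sided_ideal_def
    by (auto simp: zero_te_def plus_te_def uminus_te_def times_te_def)
  have "?A \<subseteq> P" if "prime_ideal P" for P
  proof -
    have "\<forall>a\<in>?A. \<forall>b\<in>?A. a * b \<in> P"
      using that unfolding prime_ideal_def two_sided_ideal_def
      by (auto simp: times_te_def zero_te_def)
    then show ?thesis using that idA unfolding prime_ideal_def by blast
  qed
  then show ?thesis unfolding prime_radical_def by blast
qed

theorem corollary2p2:
  assumes "reduced TYPE('a::ring_1)"
  shows "almost_armendariz TYPE('a te)"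
  unfolding almost_armendariz_def
proof (intro allI impI)
  fix a b :: "nat \<Rightarrow> 'a te" and m n i j :: nat
  assume h: "\<forall>k. (\<Sum>i\<le>k. a i * b (k - i)) = 0" and "i \<le> m" "j \<le> n"
  have "\<forall>k. (\<Sum>i\<le>k. te_r (a i) * te_r (b (k - i))) = 0"
  proof
    fix k
    have "te_r (\<Sum>i\<le>k. a i * b (k - i)) = 0" using h by (simp add: zero_te_def)
    then show "(\<Sum>i\<le>k. te_r (a i) * te_r (b (k - i))) = 0"
      by (simp add: te_r_sum times_te_def)
  qed
  then have "te_r (a i) * te_r (b j) = 0" using red_armendariz[OF assms, of "\<lambda>i. te_r (a i)" "\<lambda>i. te_r (b i)"] by blast
  then have "a i * b j = TE 0 (te_m (a i * b j))"
    by (simp add: times_te_def)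
  then show "a i * b j \<in> prime_radical TYPE('a te)" by (metis te_nil_in_rad)
qed

end
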